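(* For every field $\mathbb{F}$, $n,d\ge1$ and every $n^d\times n^d$ matrix $M$ over $\mathbb{F}$, $\mathrm{PT\text{-}rank}(M)$ equals the minimum of $\sum_{\kappa\subseteq[d-1]}\mathrm{rank}(N_\kappa^{\top_\kappa})$ over all families $(N_\kappa)_{\kappa\subseteq[d-1]}$ of $n^d\times n^d$ matrices with $M=\sum_{\kappa\subseteq[d-1]}N_\kappa$.
   Context: Rows and columns are indexed by $[n]^d$. For $k\in[d]$, $M^{\top_k}_{(i_1,\dots,i_d),(j_1,\dots,j_d)}=M_{(\dots,i_{k-1},j_k,i_{k+1},\dots),(\dots,j_{k-1},i_k,j_{k+1},\dots)}$; $M^{\top_\kappa}$ composes these over $k\in\kappa$. $M$ is PT-basic if $\mathrm{rank}(M^{\top_\kappa})=1$ for some $\kappa\subseteq[d]$; $\mathrm{PT\text{-}rank}(M)$ is the least number of PT-basic matrices summing to $M$. *)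

theory Defs
  imports Complex_Main "HOL-Library.Function_Algebras"
begin

text \<open>Multi-indices in [n]^d are functions nat => nat with coordinates 0..<d
  taking values in 0..<n (extensional: 0 outside 0..<d); coordinates are 0-indexed, so [d] = {0..<d}.
  An n^d x n^d matrix over 'a is a function of a row and a column index;
  only its values on idx n d x idx n d matter.\<close>

type_synonym 'a ptmat = "(nat \<Rightarrow> nat) \<Rightarrow> (nat \<Rightarrow> nat) \<Rightarrow> 'a"

definition idx :: "nat \<Rightarrow> nat \<Rightarrow> (nat \<Rightarrow> nat) set" where
  "idx n d = {f. (\<forall>k<d. f k < n) \<and> (\<forall>k\<ge>d. f k = 0)}"

definition mat_eq_on :: "nat \<Rightarrow> nat \<Rightarrow> 'a ptmat \<Rightarrow> 'a ptmat \<Rightarrow> bool" where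
  "mat_eq_on n d A B \<longleftrightarrow> (\<forall>i\<in>idx n d. \<forall>j\<in>idx n d. A i j = B i j)"

definition pt1 :: "nat \<Rightarrow> 'a ptmat \<Rightarrow> 'a ptmat" where
  "pt1 k M = (\<lambda>i j. M (i(k := j k)) (j(k := i k)))"

text \<open>Partial transpose over a set kappa of coordinates: composition of the pt1 k, k in kappa
  (they commute), which amounts to swapping the kappa-coordinates of row and column.\<close>
definition ptT :: "nat set \<Rightarrow> 'a ptmat \<Rightarrow> 'a ptmat" where
  "ptT \<kappa> M = (\<lambda>i j. M (\<lambda>l. if l \<in> \<kappa> then j l else i l) (\<lambda>l. if l \<in> \<kappa> then i l else j l))"

definition mrank :: "nat \<Rightarrow> nat \<Rightarrow> ('a::field) ptmat \<Rightarrow> nat" where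
  "mrank n d M = vector_space.dim (\<lambda>c (v::(nat \<Rightarrow> nat) \<Rightarrow> 'a) i. c * v i)
     ((\<lambda>j i. if i \<in> idx n d then M i j else 0) ` idx n d)"

definition pt_basic :: "nat \<Rightarrow> nat \<Rightarrow> ('a::field) ptmat \<Rightarrow> bool" where
  "pt_basic n d M \<longleftrightarrow> (\<exists>\<kappa>\<subseteq>{0..<d}. mrank n d (ptT \<kappa> M) = 1)"

definition pt_rank :: "nat \<Rightarrow> nat \<Rightarrow> ('a::field) ptmat \<Rightarrow> nat" where
  "pt_rank n d M = (LEAST r. \<exists>Bs. length Bs = r \<and> (\<forall>B\<in>set Bs. pt_basic n d B) \<and>
      mat_eq_on n d M (\<lambda>i j. \<Sum>B\<leftarrow>Bs. B i j))"

end

theory Submission imports Defs "HOL-Library.FuncSet" begin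

lemma sum_fun_app: "(sum f A) x = sum (\<lambda>a. f a x) A"
  by (induction A rule: infinite_finite_induct) auto

lemma finite_idx: "finite (idx n d)"
proof -
  have "idx n d \<subseteq> (\<lambda>g l. if l < d then g l else 0) ` (PiE {0..<d} (\<lambda>_. {0..<n}))"
  proof
    fix f assume f: "f \<in> idx n d"
    have "f = (\<lambda>l. if l < d then restrict f {0..<d} l else 0)"
      using f by (auto simp: idx_def fun_eq_iff restrict_apply)
    moreover have "restrict f {0..<d} \<in> PiE {0..<d} (\<lambda>_. {0..<n})" using f by (auto simp: idx_def)
    ultimately show "f \<in> (\<lambda>g l. if l < d then g l else 0) ` (PiE {0..<d} (\<lambda>_. {0..<n}))" by blast
  qed
  then show ?thesis by (rule finite_subset) (auto intro: finite_PiE)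
qed

interpretation fv: vector_space "\<lambda>(c::'a::field) (v::(nat\<Rightarrow>nat)\<Rightarrow>'a) i. c * v i"
  by unfold_locales (auto simp: fun_eq_iff algebra_simps)

lemma mrank_fv: "mrank n d M = fv.dim ((\<lambda>j i. if i \<in> idx n d then M i j else 0) ` idx n d)"
  unfolding mrank_def ..

lemma decomp_imp_rank:
  fixes A :: "('a::field) ptmat"
  assumes "\<forall>i\<in>idx n d. \<forall>j\<in>idx n d. A i j = (\<Sum>l<r. u l i * v l j)"
  shows "mrank n d A \<le> r"
proof -
  let ?I = "idx n d"
  define W where "W = (\<lambda>l i. if i \<in> ?I then u l i else (0::'a)) ` {..<r}"
  have "(\<lambda>j i. if i \<in> ?I then A i j else 0) ` ?I \<subseteq> fv.span W"
  proof
    fix c assume "c \<in> (\<lambda>j i. if i \<in> ?I then A i j else 0) ` ?I"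
    then obtain j where j: "j \<in> ?I" and c: "c = (\<lambda>i. if i \<in> ?I then A i j else 0)" by blast
    have "c = (\<Sum>l<r. (\<lambda>i. v l j * (if i \<in> ?I then u l i else 0)))"
      using assms j by (auto simp: c fun_eq_iff sum_fun_app mult.commute)
    also have "\<dots> \<in> fv.span W"
      by (rule fv.span_sum, rule fv.span_scale, rule fv.span_base) (auto simp: W_def)
    finally show "c \<in> fv.span W" .
  qed
  then have "mrank n d A \<le> card W" unfolding mrank_fv by (rule fv.dim_le_card) (simp add: W_def)
  also have "card W \<le> r" unfolding W_def using card_image_le[of "{..<r}"] by simp
  finally show ?thesis .
qed

lemma rank_imp_decomp:
  fixes A :: "('a::field) ptmat"
  assumes "mrank n d A \<le> r"
  shows "\<exists>u v. \<forall>i\<in>idx n d. \<forall>j\<in>idx n d. A i j = (\<Sum>l<r. u l i * v l j)"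
proof -
  let ?I = "idx n d"
  let ?C = "(\<lambda>j i. if i \<in> ?I then A i j else 0) ` ?I"
  obtain B where B: "B \<subseteq> ?C" "fv.independent B" "?C \<subseteq> fv.span B" "card B = fv.dim ?C"
    by (rule fv.basis_exists)
  have fB: "finite B" using B(1) finite_idx by (meson finite_imageI finite_subset)
  have cB: "card B \<le> r" using B(4) assms unfolding mrank_fv by simp
  obtain e where e: "bij_betw e {0..<card B} B" using ex_bij_betw_nat_finite[OF fB] by blast
  have "\<forall>j\<in>?I. \<exists>co. (\<lambda>i. if i \<in> ?I then A i j else 0) = (\<Sum>b\<in>B. (\<lambda>i. co b * b i))"
  proof
    fix j assume "j \<in> ?I"
    then have "(\<lambda>i. if i \<in> ?I then A i j else 0) \<in> fv.span B" using B(3) by blast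
    then show "\<exists>co. (\<lambda>i. if i \<in> ?I then A i j else 0) = (\<Sum>b\<in>B. (\<lambda>i. co b * b i))"
      unfolding fv.span_finite[OF fB] by blast
  qed
  then obtain co where co0: "\<forall>j\<in>?I. (\<lambda>i. if i \<in> ?I then A i j else 0) = (\<Sum>b\<in>B. (\<lambda>i. co j b * b i))"
    by (rule bchoice[THEN exE]) blast
  have co: "(\<lambda>i. if i \<in> ?I then A i j else 0) = (\<Sum>b\<in>B. (\<lambda>i. co j b * b i))" if "j \<in> ?I" for j
    using co0 that by blast
  define u where "u = (\<lambda>l i. if l < card B then e l i else (0::'a))"
  define v where "v = (\<lambda>l j. if l < card B then co j (e l) else (0::'a))"
  show ?thesis
  proof (intro exI ballI)
    fix i j assume i: "i \<in> ?I" and j: "j \<in> ?I"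
    have "A i j = (\<Sum>b\<in>B. co j b * b i)"
      using fun_cong[OF co[OF j], of i] i by (simp add: sum_fun_app)
    also have "\<dots> = (\<Sum>l\<in>{0..<card B}. co j (e l) * e l i)"
      using sum.reindex_bij_betw[OF e, of "\<lambda>b. co j b * b i"] by simp
    also have "\<dots> = (\<Sum>l<card B. u l i * v l j)"
      by (rule sum.cong) (auto simp: u_def v_def)
    also have "\<dots> = (\<Sum>l<r. u l i * v l j)"
      by (rule sum.mono_neutral_left) (use cB in \<open>auto simp: u_def\<close>)
    finally show "A i j = (\<Sum>l<r. u l i * v l j)" .
  qed
qed

lemma mrank_cong:
  assumes "mat_eq_on n d A B" shows "mrank n d A = mrank n d B"
proof -
  have "(\<lambda>j i. if i \<in> idx n d then A i j else 0) ` idx n d = (\<lambda>j i. if i \<in> idx n d then B i j else 0) ` idx n d"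
    using assms unfolding mat_eq_on_def by (intro image_cong refl) (auto simp: fun_eq_iff)
  then show ?thesis unfolding mrank_def by simp
qed

lemma mrank_transpose_le:
  fixes A :: "('a::field) ptmat"
  assumes "mrank n d A \<le> r" shows "mrank n d (\<lambda>i j. A j i) \<le> r"
proof -
  obtain u v where "\<forall>i\<in>idx n d. \<forall>j\<in>idx n d. A i j = (\<Sum>l<r. u l i * v l j)"
    using rank_imp_decomp[OF assms] by blast
  then have "\<forall>i\<in>idx n d. \<forall>j\<in>idx n d. (\<lambda>i j. A j i) i j = (\<Sum>l<r. v l i * u l j)"
    by (simp add: mult.commute)
  then show ?thesis by (rule decomp_imp_rank)
qed

lemma mrank_transpose:
  fixes A :: "('a::field) ptmat"
  shows "mrank n d (\<lambda>i j. A j i) = mrank n d A"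
  using mrank_transpose_le[of n d A "mrank n d A"] mrank_transpose_le[of n d "\<lambda>i j. A j i" "mrank n d (\<lambda>i j. A j i)"]
  by simp

lemma mrank0:
  fixes A :: "('a::field) ptmat"
  assumes "mrank n d A = 0" "i \<in> idx n d" "j \<in> idx n d" shows "A i j = 0"
  using rank_imp_decomp[of n d A 0] assms by auto

lemma sum_lessThan_add_split: fixes b :: nat shows "(\<Sum>l<a+b. f l) = (\<Sum>l<a. f l) + (\<Sum>l<b. f (a + l))"
  by (induction b) (simp_all add: add.assoc)

lemma mrank_add:
  fixes A B :: "('a::field) ptmat"
  shows "mrank n d (\<lambda>i j. A i j + B i j) \<le> mrank n d A + mrank n d B"
proof -
  let ?a = "mrank n d A" and ?b = "mrank n d B"
  obtain u v where uv: "\<forall>i\<in>idx n d. \<forall>j\<in>idx n d. A i j = (\<Sum>l<?a. u l i * v l j)"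
    using rank_imp_decomp[of n d A ?a] by blast
  obtain u' v' where uv': "\<forall>i\<in>idx n d. \<forall>j\<in>idx n d. B i j = (\<Sum>l<?b. u' l i * v' l j)"
    using rank_imp_decomp[of n d B ?b] by blast
  define U where "U = (\<lambda>l. if l < ?a then u l else u' (l - ?a))"
  define V where "V = (\<lambda>l. if l < ?a then v l else v' (l - ?a))"
  have "\<forall>i\<in>idx n d. \<forall>j\<in>idx n d. A i j + B i j = (\<Sum>l<?a + ?b. U l i * V l j)"
  proof (intro ballI)
    fix i j assume i: "i \<in> idx n d" and j: "j \<in> idx n d"
    have "(\<Sum>l<?a + ?b. U l i * V l j) = (\<Sum>l<?a. U l i * V l j) + (\<Sum>l<?b. U (?a + l) i * V (?a + l) j)"
      by (rule sum_lessThan_add_split)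
    also have "\<dots> = A i j + B i j"
      using uv uv' i j by (simp add: U_def V_def)
    finally show "A i j + B i j = (\<Sum>l<?a + ?b. U l i * V l j)" by simp
  qed
  then show ?thesis by (rule decomp_imp_rank)
qed

lemma mrank_sum_list:
  fixes Xs :: "('a::field) ptmat list"
  shows "mrank n d (\<lambda>i j. \<Sum>X\<leftarrow>Xs. X i j) \<le> (\<Sum>X\<leftarrow>Xs. mrank n d X)"
proof (induction Xs)
  case Nil
  have "mrank n d (\<lambda>i j. \<Sum>X\<leftarrow>[]. (X::'a ptmat) i j) \<le> 0"
    by (rule decomp_imp_rank[where u="\<lambda>_ _. 0" and v="\<lambda>_ _. 0"]) simp
  then show ?case by simp
next
  case (Cons X Xs)
  have "mrank n d (\<lambda>i j. \<Sum>Y\<leftarrow>X#Xs. Y i j) \<le> mrank n d X + mrank n d (\<lambda>i j. \<Sum>Y\<leftarrow>Xs. Y i j)"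
    using mrank_add[of n d X "\<lambda>i j. \<Sum>Y\<leftarrow>Xs. Y i j"] by simp
  then show ?case using Cons by simp
qed

lemma ptT_idx:
  assumes "i \<in> idx n d" "j \<in> idx n d"
  shows "(\<lambda>l. if l \<in> \<kappa> then j l else i l) \<in> idx n d"
  using assms by (auto simp: idx_def)

lemma ptT_ptT: "ptT \<kappa> (ptT \<kappa> A) = A"
  unfolding ptT_def by (simp add: fun_eq_iff if_distrib[symmetric] cong: if_cong) 

lemma ptT_compl:
  assumes "i \<in> idx n d" "j \<in> idx n d"
  shows "ptT ({0..<d} - \<kappa>) A i j = ptT \<kappa> A j i"
proof -
  have "(\<lambda>l. if l \<in> {0..<d} - \<kappa> then j l else i l) = (\<lambda>l. if l \<in> \<kappa> then i l else j l)"
   "(\<lambda>l. if l \<in> {0..<d} - \<kappa> then i l else j l) = (\<lambda>l. if l \<in> \<kappa> then j l else i l)"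
    using assms by (auto simp: idx_def fun_eq_iff)
  then show ?thesis unfolding ptT_def by simp
qed

lemma basic_reduce:
  fixes B :: "('a::field) ptmat"
  assumes "d \<ge> 1" "pt_basic n d B"
  shows "\<exists>\<kappa>\<subseteq>{0..<d-1}. mrank n d (ptT \<kappa> B) = 1"
proof -
  obtain \<kappa> where k: "\<kappa> \<subseteq> {0..<d}" "mrank n d (ptT \<kappa> B) = 1"
    using assms(2) unfolding pt_basic_def by blast
  show ?thesis
  proof (cases "d - 1 \<in> \<kappa>")
    case False
    have "\<kappa> \<subseteq> {0..<d-1}"
    proof
      fix t assume t: "t \<in> \<kappa>"
      then have "t < d" "t \<noteq> d - 1" using k(1) False by auto
      then show "t \<in> {0..<d-1}" by simp
    qed
    then show ?thesis using k(2) by blast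
  next
    case True
    have "{0..<d} - \<kappa> \<subseteq> {0..<d-1}"
    proof
      fix t assume t: "t \<in> {0..<d} - \<kappa>"
      then have "t < d" "t \<noteq> d - 1" using True by auto
      then show "t \<in> {0..<d-1}" by simp
    qed
    moreover have "mrank n d (ptT ({0..<d} - \<kappa>) B) = mrank n d (\<lambda>i j. ptT \<kappa> B j i)"
      by (rule mrank_cong) (simp add: mat_eq_on_def ptT_compl)
    ultimately show ?thesis using k(2) mrank_transpose[of n d "ptT \<kappa> B"] by auto
  qed
qed

lemma split_one:
  fixes A :: "('a::field) ptmat"
  assumes "mrank n d (ptT \<kappa> A) \<le> r" "\<kappa> \<subseteq> {0..<d}"
  shows "\<exists>Bs. length Bs \<le> r \<and> (\<forall>B\<in>set Bs. pt_basic n d B) \<and> mat_eq_on n d A (\<lambda>i j. \<Sum>B\<leftarrow>Bs. B i j)"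
proof -
  obtain u v where uv: "\<forall>i\<in>idx n d. \<forall>j\<in>idx n d. ptT \<kappa> A i j = (\<Sum>l<r. u l i * v l j)"
    using rank_imp_decomp[OF assms(1)] by blast
  define C where "C = (\<lambda>l. ptT \<kappa> (\<lambda>i j. u l i * v l j))"
  define Bs where "Bs = filter (\<lambda>B. mrank n d (ptT \<kappa> B) \<noteq> 0) (map C [0..<r])"
  have "length Bs \<le> r" unfolding Bs_def using length_filter_le[of _ "map C [0..<r]"] by simp
  moreover have "\<forall>B\<in>set Bs. pt_basic n d B"
  proof
    fix B assume "B \<in> set Bs"
    then obtain l where B: "B = C l" and nz: "mrank n d (ptT \<kappa> B) \<noteq> 0" unfolding Bs_def by auto
    have "ptT \<kappa> B = (\<lambda>i j. u l i * v l j)" unfolding B C_def ptT_ptT ..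
    then have "mrank n d (ptT \<kappa> B) \<le> 1"
      using decomp_imp_rank[where n=n and d=d and A="ptT \<kappa> B" and r=1 and u="\<lambda>_. u l" and v="\<lambda>_. v l"] by simp
    then have "mrank n d (ptT \<kappa> B) = 1" using nz by simp
    then show "pt_basic n d B" unfolding pt_basic_def using assms(2) by blast
  qed
  moreover have "mat_eq_on n d A (\<lambda>i j. \<Sum>B\<leftarrow>Bs. B i j)"
    unfolding mat_eq_on_def
  proof (intro ballI)
    fix i j assume i: "i \<in> idx n d" and j: "j \<in> idx n d"
    let ?i = "\<lambda>l. if l \<in> \<kappa> then j l else i l" and ?j = "\<lambda>l. if l \<in> \<kappa> then i l else j l"
    have i': "?i \<in> idx n d" and j': "?j \<in> idx n d" using ptT_idx i j by blast+
    have "(\<Sum>B\<leftarrow>Bs. B i j) = (\<Sum>B\<leftarrow>map C [0..<r]. B i j)"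
      unfolding Bs_def
    proof (rule sum_list_map_filter)
      fix B assume "\<not> mrank n d (ptT \<kappa> B) \<noteq> 0"
      then have "ptT \<kappa> B ?i ?j = 0" using mrank0 i' j' by blast
      moreover have "ptT \<kappa> B ?i ?j = ptT \<kappa> (ptT \<kappa> B) i j" by (simp add: ptT_def)
      ultimately show "B i j = 0" by (simp add: ptT_ptT)
    qed
    also have "\<dots> = (\<Sum>l<r. C l i j)"
      by (simp add: sum_list_sum_nth atLeast0LessThan)
    also have "\<dots> = (\<Sum>l<r. u l ?i * v l ?j)" by (simp add: C_def ptT_def)
    also have "\<dots> = ptT \<kappa> A ?i ?j" using uv i' j' by simp
    also have "\<dots> = ptT \<kappa> (ptT \<kappa> A) i j" by (simp add: ptT_def)
    also have "\<dots> = A i j" by (simp add: ptT_ptT)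
    finally show "A i j = (\<Sum>B\<leftarrow>Bs. B i j)" by simp
  qed
  ultimately show ?thesis by blast
qed

lemma aggregate:
  fixes N :: "nat set \<Rightarrow> ('a::field) ptmat"
  assumes "finite K" "\<forall>\<kappa>\<in>K. \<kappa> \<subseteq> {0..<d}"
  shows "\<exists>Bs. length Bs \<le> (\<Sum>\<kappa>\<in>K. mrank n d (ptT \<kappa> (N \<kappa>))) \<and> (\<forall>B\<in>set Bs. pt_basic n d B)
     \<and> mat_eq_on n d (\<lambda>i j. \<Sum>\<kappa>\<in>K. N \<kappa> i j) (\<lambda>i j. \<Sum>B\<leftarrow>Bs. B i j)"
  using assms
proof (induction K rule: finite_induct)
  case empty
  show ?case by (rule exI[of _ "[]"]) (simp add: mat_eq_on_def)
next
  case (insert x F)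
  obtain Bs1 where B1: "length Bs1 \<le> mrank n d (ptT x (N x))" "\<forall>B\<in>set Bs1. pt_basic n d B"
    "mat_eq_on n d (N x) (\<lambda>i j. \<Sum>B\<leftarrow>Bs1. B i j)"
    using split_one[of n d x "N x" "mrank n d (ptT x (N x))"] insert.prems by auto
  obtain Bs2 where B2: "length Bs2 \<le> (\<Sum>\<kappa>\<in>F. mrank n d (ptT \<kappa> (N \<kappa>)))" "\<forall>B\<in>set Bs2. pt_basic n d B"
     "mat_eq_on n d (\<lambda>i j. \<Sum>\<kappa>\<in>F. N \<kappa> i j) (\<lambda>i j. \<Sum>B\<leftarrow>Bs2. B i j)"
    using insert by auto
  show ?case
    by (rule exI[of _ "Bs1 @ Bs2"]) (use B1 B2 insert.hyps in \<open>auto simp: mat_eq_on_def\<close>)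
qed

lemma sum_filter_partition:
  fixes f :: "'b \<Rightarrow> 'c::comm_monoid_add"
  assumes "finite K" "\<forall>x\<in>set xs. k x \<in> K"
  shows "(\<Sum>\<kappa>\<in>K. sum_list (map f (filter (\<lambda>x. k x = \<kappa>) xs))) = sum_list (map f xs)"
  using assms(2)
proof (induction xs)
  case Nil
  then show ?case by simp
next
  case (Cons x xs)
  have "(\<Sum>\<kappa>\<in>K. sum_list (map f (filter (\<lambda>y. k y = \<kappa>) (x # xs))))
     = (\<Sum>\<kappa>\<in>K. (if k x = \<kappa> then f x else 0) + sum_list (map f (filter (\<lambda>y. k y = \<kappa>) xs)))"
    by (rule sum.cong) auto
  also have "\<dots> = (\<Sum>\<kappa>\<in>K. (if k x = \<kappa> then f x else 0)) + (\<Sum>\<kappa>\<in>K. sum_list (map f (filter (\<lambda>y. k y = \<kappa>) xs)))"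
    by (rule sum.distrib)
  also have "\<dots> = f x + sum_list (map f xs)"
    using Cons assms(1) by (simp add: sum.delta)
  finally show ?case by simp
qed

lemma mat_eq_on_trans: "mat_eq_on n d A B \<Longrightarrow> mat_eq_on n d B C \<Longrightarrow> mat_eq_on n d A C"
  unfolding mat_eq_on_def by simp

theorem lemma3p5:
  fixes M :: "('a::field) ptmat" and n d :: nat
  assumes "n \<ge> 1" and "d \<ge> 1"
  shows "(\<exists>N :: nat set \<Rightarrow> 'a ptmat.
            mat_eq_on n d M (\<lambda>i j. \<Sum>\<kappa>\<in>Pow {0..<d-1}. N \<kappa> i j) \<and>
            pt_rank n d M = (\<Sum>\<kappa>\<in>Pow {0..<d-1}. mrank n d (ptT \<kappa> (N \<kappa>))))
       \<and> (\<forall>N :: nat set \<Rightarrow> 'a ptmat.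
            mat_eq_on n d M (\<lambda>i j. \<Sum>\<kappa>\<in>Pow {0..<d-1}. N \<kappa> i j) \<longrightarrow>
            pt_rank n d M \<le> (\<Sum>\<kappa>\<in>Pow {0..<d-1}. mrank n d (ptT \<kappa> (N \<kappa>))))"
proof -
  let ?K = "Pow {0..<d-1}"
  define P where "P = (\<lambda>r. \<exists>Bs. length Bs = r \<and> (\<forall>B\<in>set Bs. pt_basic n d B) \<and>
      mat_eq_on n d M (\<lambda>i j. \<Sum>B\<leftarrow>Bs. B i j))"
  have ptr: "pt_rank n d M = Least P" unfolding pt_rank_def P_def ..
  have Kd: "\<forall>\<kappa>\<in>?K. \<kappa> \<subseteq> {0..<d}" by auto
  have part2: "P (length Bs) \<and> pt_rank n d M \<le> (\<Sum>\<kappa>\<in>?K. mrank n d (ptT \<kappa> (N \<kappa>)))"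
    if N: "mat_eq_on n d M (\<lambda>i j. \<Sum>\<kappa>\<in>?K. N \<kappa> i j)"
     and Bs: "length Bs \<le> (\<Sum>\<kappa>\<in>?K. mrank n d (ptT \<kappa> (N \<kappa>)))" "\<forall>B\<in>set Bs. pt_basic n d B"
       "mat_eq_on n d (\<lambda>i j. \<Sum>\<kappa>\<in>?K. N \<kappa> i j) (\<lambda>i j. \<Sum>B\<leftarrow>Bs. B i j)"
     for N :: "nat set \<Rightarrow> 'a ptmat" and Bs
  proof -
    have "P (length Bs)" unfolding P_def using Bs mat_eq_on_trans[OF N Bs(3)] by blast
    then have "Least P \<le> length Bs" by (rule Least_le)
    then show ?thesis using Bs(1) ptr \<open>P (length Bs)\<close> by simp
  qed
  have II: "\<forall>N :: nat set \<Rightarrow> 'a ptmat.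
            mat_eq_on n d M (\<lambda>i j. \<Sum>\<kappa>\<in>?K. N \<kappa> i j) \<longrightarrow>
            pt_rank n d M \<le> (\<Sum>\<kappa>\<in>?K. mrank n d (ptT \<kappa> (N \<kappa>)))"
  proof (intro allI impI)
    fix N :: "nat set \<Rightarrow> 'a ptmat"
    assume N: "mat_eq_on n d M (\<lambda>i j. \<Sum>\<kappa>\<in>?K. N \<kappa> i j)"
    obtain Bs where "length Bs \<le> (\<Sum>\<kappa>\<in>?K. mrank n d (ptT \<kappa> (N \<kappa>)))" "\<forall>B\<in>set Bs. pt_basic n d B"
       "mat_eq_on n d (\<lambda>i j. \<Sum>\<kappa>\<in>?K. N \<kappa> i j) (\<lambda>i j. \<Sum>B\<leftarrow>Bs. B i j)"
      using aggregate[OF _ Kd, where N=N and n=n] by auto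
    then show "pt_rank n d M \<le> (\<Sum>\<kappa>\<in>?K. mrank n d (ptT \<kappa> (N \<kappa>)))" using part2[OF N] by blast
  qed
  define N0 :: "nat set \<Rightarrow> 'a ptmat" where "N0 = (\<lambda>\<kappa> i j. if \<kappa> = {} then M i j else 0)"
  have N0: "mat_eq_on n d M (\<lambda>i j. \<Sum>\<kappa>\<in>?K. N0 \<kappa> i j)"
    unfolding mat_eq_on_def N0_def by (simp add: sum.delta')
  obtain Bs0 where "length Bs0 \<le> (\<Sum>\<kappa>\<in>?K. mrank n d (ptT \<kappa> (N0 \<kappa>)))" "\<forall>B\<in>set Bs0. pt_basic n d B"
       "mat_eq_on n d (\<lambda>i j. \<Sum>\<kappa>\<in>?K. N0 \<kappa> i j) (\<lambda>i j. \<Sum>B\<leftarrow>Bs0. B i j)"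
    using aggregate[OF _ Kd, where N=N0 and n=n] by auto
  then have "P (length Bs0)" using part2[OF N0] by blast
  then have "P (Least P)" by (rule LeastI)
  then obtain Bs where Bs: "length Bs = pt_rank n d M" "\<forall>B\<in>set Bs. pt_basic n d B"
      "mat_eq_on n d M (\<lambda>i j. \<Sum>B\<leftarrow>Bs. B i j)"
    unfolding P_def ptr by blast
  have "\<forall>B\<in>set Bs. \<exists>\<kappa>. \<kappa> \<subseteq> {0..<d-1} \<and> mrank n d (ptT \<kappa> B) = 1"
    using Bs(2) basic_reduce[OF assms(2)] by blast
  then obtain k where k: "\<forall>B\<in>set Bs. k B \<subseteq> {0..<d-1} \<and> mrank n d (ptT (k B) B) = 1"
    by (rule bchoice[THEN exE]) blast
  define N :: "nat set \<Rightarrow> 'a ptmat" where "N = (\<lambda>\<kappa> i j. \<Sum>B\<leftarrow>filter (\<lambda>B. k B = \<kappa>) Bs. B i j)"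
  have kK: "\<forall>B\<in>set Bs. k B \<in> ?K" using k by auto
  have NM: "mat_eq_on n d M (\<lambda>i j. \<Sum>\<kappa>\<in>?K. N \<kappa> i j)"
  proof -
    have "(\<lambda>i j. \<Sum>\<kappa>\<in>?K. N \<kappa> i j) = (\<lambda>i j. \<Sum>B\<leftarrow>Bs. B i j)"
      unfolding N_def fun_eq_iff
    proof (intro allI)
      fix i j
      show "(\<Sum>\<kappa>\<in>?K. \<Sum>B\<leftarrow>filter (\<lambda>B. k B = \<kappa>) Bs. B i j) = (\<Sum>B\<leftarrow>Bs. B i j)"
        using sum_filter_partition[OF _ kK, where f="\<lambda>B. B i j"] by simp
    qed
    then show ?thesis using Bs(3) by simp
  qed
  have "(\<Sum>\<kappa>\<in>?K. mrank n d (ptT \<kappa> (N \<kappa>))) \<le> (\<Sum>\<kappa>\<in>?K. length (filter (\<lambda>B. k B = \<kappa>) Bs))"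
  proof (rule sum_mono)
    fix \<kappa> assume "\<kappa> \<in> ?K"
    let ?F = "filter (\<lambda>B. k B = \<kappa>) Bs"
    have "ptT \<kappa> (N \<kappa>) = (\<lambda>i j. \<Sum>X\<leftarrow>map (ptT \<kappa>) ?F. X i j)"
      unfolding N_def by (simp add: ptT_def fun_eq_iff comp_def)
    then have "mrank n d (ptT \<kappa> (N \<kappa>)) \<le> (\<Sum>X\<leftarrow>map (ptT \<kappa>) ?F. mrank n d X)"
      using mrank_sum_list by metis
    also have "\<dots> = (\<Sum>B\<leftarrow>?F. (1::nat))"
      unfolding map_map comp_def using k by (intro arg_cong[where f=sum_list] map_cong) auto
    also have "\<dots> = length ?F" by (simp add: sum_list_triv)
    finally show "mrank n d (ptT \<kappa> (N \<kappa>)) \<le> length ?F" .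
  qed
  also have "\<dots> = (\<Sum>\<kappa>\<in>?K. sum_list (map (\<lambda>_. 1::nat) (filter (\<lambda>B. k B = \<kappa>) Bs)))"
    by (simp add: sum_list_triv)
  also have "\<dots> = sum_list (map (\<lambda>_. 1::nat) Bs)"
    by (rule sum_filter_partition[OF _ kK]) simp
  also have "\<dots> = pt_rank n d M" using Bs(1) by (simp add: sum_list_triv)
  finally have "(\<Sum>\<kappa>\<in>?K. mrank n d (ptT \<kappa> (N \<kappa>))) \<le> pt_rank n d M" .
  with II NM have "pt_rank n d M = (\<Sum>\<kappa>\<in>?K. mrank n d (ptT \<kappa> (N \<kappa>)))"
    using le_antisym by blast
  with NM II show ?thesis by blast
qed

end
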